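(* Let $X$, $Y$ be metrizable spaces with $Y$ separable. For every nonzero countable ordinal $\xi$, if there is a sequence of $\mathbf{\Delta}^0_\xi$-functions from $X$ to $Y$ converging pointwise to $f:X\to Y$, then $f$ is of Baire class $\xi$. Conversely, if $\xi>1$ and $f: X\to Y$ is of Baire class $\xi$, then there is a sequence of $\mathbf{\Delta}^0_\xi$-functions from $X$ to $Y$ converging pointwise to $f$.
   Context: Work in ZF plus countable choice over the reals. For metrizable $X,Y$: $f:X\to Y$ is of Baire class $1$ if $f^{-1}(U)\in\mathbf{\Sigma}^0_2(X)$ for every open $U\subseteq Y$; for $1<\xi<\omega_1$, $f$ is of Baire class $\xi$ if it is the pointwise limit of a sequence of functions $f_n:X\to Y$ each of Baire class $\xi_n$ for some $1\le\xi_n<\xi$. For a nonzero countable ordinal $\eta$, $g:X\to Y$ is a $\mathbf{\Delta}^0_\eta$-function if $g^{-1}(A)\in\mathbf{\Sigma}^0_\eta(X)$ for every $A\in\mathbf{\Sigma}^0_\eta(Y)$. *)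

theory Defs
  imports "HOL-Analysis.Analysis"
begin

text \<open>Nonzero countable ordinals are represented by (nonempty) well-orders on subsets
of nat; the ordinal is the order type. Comparison of ordinals is BNF_Wellorder_Constructions.ordLess.\<close>

definition cord :: "nat rel \<Rightarrow> bool" where
  "cord r \<longleftrightarrow> Well_order r \<and> Field r \<noteq> {}"

definition is_one :: "nat rel \<Rightarrow> bool" where
  "is_one r \<longleftrightarrow> (\<exists>k. Field r = {k})"

definition ord_two :: "nat rel" where
  "ord_two = {(0,0),(0,1),(1,1)}"

text \<open>Additive Borel class Sigma^0_xi (X), xi = order type of r.
  Sigma^0_1 = open sets; for xi > 1: countable unions of complements of
  Sigma^0_eta sets with 1 <= eta < xi.\<close>
inductive bsigma :: "'a topology \<Rightarrow> nat rel \<Rightarrow> 'a set \<Rightarrow> bool" where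
  base: "\<lbrakk>cord r; is_one r; openin X A\<rbrakk> \<Longrightarrow> bsigma X r A"
| step: "\<lbrakk>cord r; \<not> is_one r;
          \<And>n::nat. cord (s n) \<and> (s n, r) \<in> BNF_Wellorder_Constructions.ordLess \<and> bsigma X (s n) (B n);
          A = (\<Union>n::nat. topspace X - B n)\<rbrakk> \<Longrightarrow> bsigma X r A"

inductive baire_cls :: "'a topology \<Rightarrow> 'b topology \<Rightarrow> nat rel \<Rightarrow> ('a \<Rightarrow> 'b) \<Rightarrow> bool"
  where
  base: "\<lbrakk>cord r; is_one r; f ` topspace X \<subseteq> topspace Y;
          \<forall>U. openin Y U \<longrightarrow> bsigma X ord_two {x \<in> topspace X. f x \<in> U}\<rbrakk>
         \<Longrightarrow> baire_cls X Y r f"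
| step: "\<lbrakk>cord r; \<not> is_one r; f ` topspace X \<subseteq> topspace Y;
          \<And>n::nat. cord (s n) \<and> (s n, r) \<in> BNF_Wellorder_Constructions.ordLess \<and> baire_cls X Y (s n) (g n);
          \<forall>x\<in>topspace X. limitin Y (\<lambda>n. g n x) (f x) sequentially\<rbrakk>
         \<Longrightarrow> baire_cls X Y r f"

definition delta0_fun :: "'a topology \<Rightarrow> 'b topology \<Rightarrow> nat rel \<Rightarrow> ('a \<Rightarrow> 'b) \<Rightarrow> bool" where
  "delta0_fun X Y r g \<longleftrightarrow> g ` topspace X \<subseteq> topspace Y \<and>
     (\<forall>A. bsigma Y r A \<longrightarrow> bsigma X r {x \<in> topspace X. g x \<in> A})"

end

theory Submission
  imports Defs
begin


definition one0 :: "nat rel" where "one0 = {(0,0)}"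

lemma Field_one0: "Field one0 = {0}" by (auto simp: one0_def Field_def)
lemma Field_ord_two: "Field ord_two = {0,1}" by (auto simp: ord_two_def Field_def)

lemma cord_one0: "cord one0"
proof -
  have "one0 = Restr natLeq {0}" by (auto simp: one0_def natLeq_def)
  then have "Well_order one0" using Well_order_Restr natLeq_Well_order by metis
  then show ?thesis by (simp add: cord_def Field_one0)
qed

lemma is_one_one0: "is_one one0" by (auto simp: is_one_def Field_one0)

lemma cord_two: "cord ord_two"
proof -
  have "ord_two = Restr natLeq {0,1}" by (auto simp: ord_two_def natLeq_def)
  then have "Well_order ord_two" using Well_order_Restr natLeq_Well_order by metis
  then show ?thesis by (simp add: cord_def Field_ord_two)
qed

lemma not_one_two: "\<not> is_one ord_two"
  by (auto simp: is_one_def Field_ord_two)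

lemma cord_WO: "cord r \<Longrightarrow> Well_order r" by (simp add: cord_def)

lemma is_one_card: assumes "cord r" shows "is_one r \<longleftrightarrow> (\<forall>a\<in>Field r. \<forall>b\<in>Field r. a = b)"
proof
  assume "is_one r" then show "\<forall>a\<in>Field r. \<forall>b\<in>Field r. a = b" unfolding is_one_def by auto
next
  assume a: "\<forall>a\<in>Field r. \<forall>b\<in>Field r. a = b"
  obtain k where "k \<in> Field r" using assms unfolding cord_def by blast
  then have "Field r = {k}" using a by blast
  then show "is_one r" unfolding is_one_def by blast
qed

lemma leq_one: assumes "cord s" "(s,t) \<in> ordLeq" "is_one t" shows "is_one s"
proof -
  obtain f where e: "embed s t f" using assms(2) by (auto simp: ordLeq_def)
  have i: "inj_on f (Field s)" using embed_inj_on[OF _ e] assms(1) by (simp add: cord_def)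
  have "f ` Field s \<subseteq> Field t" using embed_Field[OF e] .
  moreover obtain k where "Field t = {k}" using assms(3) unfolding is_one_def by blast
  ultimately have "\<forall>a\<in>Field s. f a = k" by blast
  then have "\<forall>a\<in>Field s. \<forall>b\<in>Field s. a = b" using i unfolding inj_on_def by metis
  then show ?thesis using assms(1) is_one_card by blast
qed

lemma one0_less: assumes "cord r" "\<not> is_one r" shows "(one0, r) \<in> ordLess"
proof -
  have "\<not> (r, one0) \<in> ordLeq" using leq_one[OF assms(1) _ is_one_one0] assms(2) by blast
  then show ?thesis using not_ordLeq_iff_ordLess cord_WO cord_one0 assms(1) by blast
qed

lemma less_not_one: assumes "cord s" "(s,r) \<in> ordLess" shows "\<not> is_one r"
proof
  assume o: "is_one r"
  obtain f where e: "embed s r f" using assms(2) ordLess_imp_ordLeq by (auto simp: ordLeq_def)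
  have "f ` Field s \<subseteq> Field r" using embed_Field[OF e] .
  moreover have "Field s \<noteq> {}" using assms(1) by (simp add: cord_def)
  ultimately have "f ` Field s = Field r" using o unfolding is_one_def by (metis image_is_empty subset_singletonD)
  then show False using BNF_Wellorder_Constructions.ordLess_Field[OF assms(2) e] by simp
qed

lemma less_two_one: assumes "cord s" "(s, ord_two) \<in> ordLess" shows "is_one s"
proof (rule ccontr)
  assume o: "\<not> is_one s"
  obtain f where e: "embed s ord_two f" using assms(2) ordLess_imp_ordLeq by (auto simp: ordLeq_def)
  have i: "inj_on f (Field s)" using embed_inj_on[OF _ e] assms(1) by (simp add: cord_def)
  have sub: "f ` Field s \<subseteq> {0,1}" using embed_Field[OF e] Field_ord_two by simp
  obtain a b where ab: "a \<in> Field s" "b \<in> Field s" "a \<noteq> b" using o assms(1) is_one_card by blast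
  then have "f a \<noteq> f b" using i by (meson inj_onD)
  have "f a \<in> {0,1}" "f b \<in> {0,1}" using sub ab by auto
  then have "{0,1} \<subseteq> f ` Field s" using \<open>f a \<noteq> f b\<close> ab by (auto, (metis image_eqI)+)
  then have "f ` Field s = {0,1}" using sub by blast
  then show False using BNF_Wellorder_Constructions.ordLess_Field[OF assms(2) e] Field_ord_two by simp
qed



lemma bsigma_sub: "bsigma X r A \<Longrightarrow> A \<subseteq> topspace X"
  by (induction rule: bsigma.induct) (auto dest: openin_subset)

lemma bsigma_one_iff: assumes "cord r" "is_one r" shows "bsigma X r A \<longleftrightarrow> openin X A"
proof
  assume "bsigma X r A" then show "openin X A" using assms by (cases rule: bsigma.cases) auto
next
  assume "openin X A" then show "bsigma X r A" using assms by (rule bsigma.base[rotated 2])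
qed

lemma bsigma_stepE_ex:
  assumes "bsigma X r A" "\<not> is_one r"
  shows "\<exists>s B. (\<forall>m::nat. cord (s m) \<and> (s m, r) \<in> ordLess \<and> bsigma X (s m) (B m))
           \<and> A = (\<Union>m. topspace X - B m)"
  using assms(1) unfolding bsigma.simps[of X r A] using assms(2) by blast

lemma bsigma_stepE:
  assumes "bsigma X r A" "\<not> is_one r"
  obtains s B where "\<And>n::nat. cord (s n) \<and> (s n, r) \<in> ordLess \<and> bsigma X (s n) (B n)"
    "A = (\<Union>n. topspace X - B n)"
proof -
  from bsigma_stepE_ex[OF assms] obtain s B where
    h: "\<forall>m::nat. cord (s m) \<and> (s m, r) \<in> ordLess \<and> bsigma X (s m) (B m)" "A = (\<Union>m. topspace X - B m)"
    by blast
  show thesis by (rule that[of s B]) (use h in blast)+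
qed

lemma bsigma_stepI:
  assumes "cord r" "\<not> is_one r"
    and "\<And>k::nat. \<exists>s. cord s \<and> (s, r) \<in> ordLess \<and> bsigma X s (B k)"
  shows "bsigma X r (\<Union>k. topspace X - B k)"
proof -
  define s where "s k = (SOME s. cord s \<and> (s, r) \<in> ordLess \<and> bsigma X s (B k))" for k
  have s: "\<forall>k. cord (s k) \<and> (s k, r) \<in> ordLess \<and> bsigma X (s k) (B k)"
    unfolding s_def using someI_ex[OF assms(3)] by blast
  show ?thesis
    by (rule bsigma.step[where r=r and s=s and X=X and B=B and A="\<Union>k. topspace X - B k", OF assms(1,2)])
       (use s in blast, rule refl)
qed

lemma open_witness:
  assumes "cord r" "\<not> is_one r" "openin X B"
  shows "\<exists>s. cord s \<and> (s, r) \<in> ordLess \<and> bsigma X s B"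
proof (intro exI conjI)
  show "cord one0" by (rule cord_one0)
  show "(one0, r) \<in> ordLess" by (rule one0_less[OF assms(1,2)])
  show "bsigma X one0 B" by (rule bsigma.base[OF cord_one0 is_one_one0 assms(3)])
qed

lemma bsigma_compl_lower:
  assumes "cord s" "cord r" "(s, r) \<in> ordLess" "bsigma X s B"
  shows "bsigma X r (topspace X - B)"
proof -
  have "\<not> is_one r" using less_not_one assms by blast
  have "bsigma X r (\<Union>k::nat. topspace X - B)" by (rule bsigma_stepI[where B="\<lambda>_. B", OF assms(2) \<open>\<not> is_one r\<close>]) (use assms in blast)
  then show ?thesis by simp
qed

lemma bsigma_UN:
  assumes "cord r" "\<And>n::nat. bsigma X r (A n)"
  shows "bsigma X r (\<Union>n. A n)"
proof (cases "is_one r")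
  case True
  then show ?thesis using assms bsigma_one_iff by (metis openin_Union imageE)
next
  case False
  define Q where "Q n s B \<longleftrightarrow> (\<forall>m::nat. cord (s m) \<and> (s m, r) \<in> ordLess \<and> bsigma X (s m) (B m))
       \<and> A n = (\<Union>m. topspace X - B m)" for n s B
  have ex: "\<exists>s B. Q n s B" for n
    unfolding Q_def by (rule bsigma_stepE_ex[OF assms(2) False])
  define S where "S n = (SOME s. \<exists>B. Q n s B)" for n
  have ex2: "\<exists>B. Q n (S n) B" for n unfolding S_def by (rule someI_ex[of "\<lambda>s. \<exists>B. Q n s B", OF ex])
  define BB where "BB n = (SOME B. Q n (S n) B)" for n
  have "Q n (S n) (BB n)" for n unfolding BB_def by (rule someI_ex[of "\<lambda>B. Q n (S n) B", OF ex2])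
  then have sB: "\<And>n m. cord (S n m) \<and> (S n m, r) \<in> ordLess \<and> bsigma X (S n m) (BB n m)"
     "\<And>n. A n = (\<Union>m. topspace X - BB n m)" unfolding Q_def by blast+
  define C where "C k = BB (fst (prod_decode k)) (snd (prod_decode k))" for k
  have eq: "(\<Union>n. A n) = (\<Union>k. topspace X - C k)"
  proof
    show "(\<Union>n. A n) \<subseteq> (\<Union>k. topspace X - C k)"
    proof
      fix x assume "x \<in> (\<Union>n. A n)"
      then obtain n m where "x \<in> topspace X - BB n m" using sB(2) by blast
      then show "x \<in> (\<Union>k. topspace X - C k)" unfolding C_def
        by (intro UN_I[of "prod_encode (n,m)"]) auto
    qed
    show "(\<Union>k. topspace X - C k) \<subseteq> (\<Union>n. A n)" unfolding C_def using sB(2) by auto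
  qed
  have "bsigma X r (\<Union>k. topspace X - C k)"
    by (rule bsigma_stepI[where B=C, OF assms(1) False]) (use sB(1) in \<open>auto simp: C_def\<close>)
  then show ?thesis using eq by simp
qed

lemma bsigma_Un:
  assumes "cord r" "bsigma X r A" "bsigma X r B"
  shows "bsigma X r (A \<union> B)"
proof -
  have "(A \<union> B) = (\<Union>n::nat. if n = 0 then A else B)"
    using UN_I[of 0 UNIV _ "\<lambda>n::nat. if n = 0 then A else B"] UN_I[of 1 UNIV _ "\<lambda>n::nat. if n = 0 then A else B"]
    by (auto split: if_splits)
  moreover have "bsigma X r (\<Union>n::nat. if n = 0 then A else B)"
    by (rule bsigma_UN[where A="\<lambda>n::nat. if n = 0 then A else B"]) (use assms in auto)
  ultimately show ?thesis by simp
qed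

lemma bsigma_topspace: assumes "cord r" shows "bsigma X r (topspace X)"
proof (cases "is_one r")
  case True then show ?thesis by (rule bsigma.base[OF assms _ openin_topspace])
next
  case False
  have "bsigma X r (\<Union>k::nat. topspace X - {})"
    by (rule bsigma_stepI[where B="\<lambda>_. {}", OF assms False]) (rule open_witness[OF assms False], simp)
  then show ?thesis by simp
qed

lemma bsigma_empty: assumes "cord r" shows "bsigma X r {}"
proof (cases "is_one r")
  case True then show ?thesis by (rule bsigma.base[OF assms _ openin_empty])
next
  case False
  have "bsigma X r (\<Union>k::nat. topspace X - topspace X)"
    by (rule bsigma_stepI[where B="\<lambda>_. topspace X", OF assms False]) (rule open_witness[OF assms False], simp)
  then show ?thesis by simp
qed

lemma bsigma_mono:
  assumes X: "metrizable_space X" and "cord s" "cord r" "(s, r) \<in> ordLeq" "bsigma X s A"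
  shows "bsigma X r A"
proof (cases "is_one s")
  case True
  then have o: "openin X A" using assms bsigma_one_iff by blast
  show ?thesis
  proof (cases "is_one r")
    case True then show ?thesis by (rule bsigma.base[OF assms(3) _ o])
  next
    case False
    have "\<exists>C. (\<forall>n::nat. closedin X (C n)) \<and> (\<forall>n. C n \<subseteq> C(Suc n)) \<and> \<Union> (range C) = A"
      by (rule fsigma_in_ascending[THEN iffD1, OF open_imp_fsigma_in[OF X o]])
    then obtain C where C: "\<And>n::nat. closedin X (C n)" "\<Union> (range C) = A" by blast
    have "bsigma X r (\<Union>k::nat. topspace X - (topspace X - C k))"
      by (rule bsigma_stepI[where B="\<lambda>k. topspace X - C k", OF assms(3) False])
         (rule open_witness[OF assms(3) False], use C(1) closedin_def in blast)
    moreover have "(\<Union>k::nat. topspace X - (topspace X - C k)) = A"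
      using C closedin_subset by auto
    ultimately show ?thesis by simp
  qed
next
  case False
  then have nr: "\<not> is_one r" using leq_one assms by blast
  from bsigma_stepE_ex[OF assms(5) False] obtain t B where tB: "\<forall>n::nat. cord (t n) \<and> (t n, s) \<in> ordLess \<and> bsigma X (t n) (B n)"
    "A = (\<Union>n. topspace X - B n)" by blast
  have "bsigma X r (\<Union>n. topspace X - B n)"
    by (rule bsigma_stepI[where B=B, OF assms(3) nr]) (use tB(1) ordLess_ordLeq_trans assms(4) in blast)
  then show ?thesis using tB(2) by simp
qed

lemma max2: assumes "cord a" "cord b" shows "\<exists>c. (c = a \<or> c = b) \<and> (a, c) \<in> ordLeq \<and> (b, c) \<in> ordLeq"
proof (cases "(a, b) \<in> ordLeq")
  case True then show ?thesis using ordLeq_reflexive[OF cord_WO[OF assms(2)]] by blast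
next
  case False
  then have "(b, a) \<in> ordLeq" using ordLeq_total[OF cord_WO[OF assms(1)] cord_WO[OF assms(2)]] by blast
  then show ?thesis using ordLeq_reflexive[OF cord_WO[OF assms(1)]] by blast
qed

lemma bsigma_Un2:
  assumes X: "metrizable_space X" and "cord a" "cord b" "bsigma X a A" "bsigma X b B"
  shows "\<exists>c. (c = a \<or> c = b) \<and> bsigma X c (A \<union> B)"
proof -
  obtain c where c: "(c = a \<or> c = b)" "(a, c) \<in> ordLeq" "(b, c) \<in> ordLeq" using max2[OF assms(2,3)] by blast
  have cc: "cord c" using c(1) assms(2,3) by blast
  have "bsigma X c (A \<union> B)" by (rule bsigma_Un[OF cc bsigma_mono[OF X assms(2) cc c(2) assms(4)] bsigma_mono[OF X assms(3) cc c(3) assms(5)]])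
  then show ?thesis using c(1) by blast
qed

lemma bsigma_Int:
  assumes X: "metrizable_space X" and r: "cord r" and "bsigma X r A" "bsigma X r A'"
  shows "bsigma X r (A \<inter> A')"
proof (cases "is_one r")
  case True then show ?thesis
    using assms(3,4) bsigma_one_iff[OF r True] by (metis openin_Int)
next
  case False
  from bsigma_stepE_ex[OF assms(3) False] obtain s B where sB: "\<forall>n::nat. cord (s n) \<and> (s n, r) \<in> ordLess \<and> bsigma X (s n) (B n)"
    "A = (\<Union>n. topspace X - B n)" by blast
  from bsigma_stepE_ex[OF assms(4) False] obtain t C where tC: "\<forall>n::nat. cord (t n) \<and> (t n, r) \<in> ordLess \<and> bsigma X (t n) (C n)"
    "A' = (\<Union>n. topspace X - C n)" by blast
  define D where "D k = B (fst (prod_decode k)) \<union> C (snd (prod_decode k))" for k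
  have eq: "A \<inter> A' = (\<Union>k. topspace X - D k)"
  proof
    show "A \<inter> A' \<subseteq> (\<Union>k. topspace X - D k)"
    proof
      fix x assume "x \<in> A \<inter> A'"
      then obtain n m where "x \<in> topspace X - B n" "x \<in> topspace X - C m" using sB(2) tC(2) by blast
      then show "x \<in> (\<Union>k. topspace X - D k)" unfolding D_def
        by (intro UN_I[of "prod_encode (n,m)"]) auto
    qed
    show "(\<Union>k. topspace X - D k) \<subseteq> A \<inter> A'" unfolding D_def using sB(2) tC(2) by auto
  qed
  have "bsigma X r (\<Union>k. topspace X - D k)"
  proof (rule bsigma_stepI[where B=D, OF r False])
    fix k
    let ?n = "fst (prod_decode k)" and ?m = "snd (prod_decode k)"
    have h1: "cord (s ?n)" "(s ?n, r) \<in> ordLess" "bsigma X (s ?n) (B ?n)" using sB(1) by blast+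
    have h2: "cord (t ?m)" "(t ?m, r) \<in> ordLess" "bsigma X (t ?m) (C ?m)" using tC(1) by blast+
    obtain c where c: "c = s ?n \<or> c = t ?m" "bsigma X c (D k)"
      using bsigma_Un2[OF X h1(1) h2(1) h1(3) h2(3)] unfolding D_def by blast
    show "\<exists>s. cord s \<and> (s, r) \<in> ordLess \<and> bsigma X s (D k)"
      using c h1 h2 by blast
  qed
  then show ?thesis using eq by simp
qed



definition sig1 :: "'a topology \<Rightarrow> nat rel \<Rightarrow> 'a set \<Rightarrow> bool" where
  "sig1 X r A \<longleftrightarrow> (\<exists>B. (\<forall>n::nat. bsigma X r (B n)) \<and> A = (\<Union>n. topspace X - B n))"

lemma sig1I: "(\<And>n::nat. bsigma X r (B n)) \<Longrightarrow> A = (\<Union>n. topspace X - B n) \<Longrightarrow> sig1 X r A"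
  unfolding sig1_def by blast

lemma sig1_sub: "sig1 X r A \<Longrightarrow> A \<subseteq> topspace X"
  unfolding sig1_def by blast

lemma sig1_compl: "bsigma X r B \<Longrightarrow> sig1 X r (topspace X - B)"
  by (rule sig1I[where B="\<lambda>_. B"]) simp_all

lemma sig1_UN:
  assumes "\<And>n::nat. sig1 X r (A n)"
  shows "sig1 X r (\<Union>n. A n)"
proof -
  define Q where "Q n B \<longleftrightarrow> (\<forall>m::nat. bsigma X r (B m)) \<and> A n = (\<Union>m. topspace X - B m)" for n B
  have ex: "\<exists>B. Q n B" for n using assms[of n] unfolding Q_def sig1_def .
  define BB where "BB n = (SOME B. Q n B)" for n
  have "Q n (BB n)" for n unfolding BB_def by (rule someI_ex[of "\<lambda>B. Q n B", OF ex])
  then have sB: "\<And>n m. bsigma X r (BB n m)" "\<And>n. A n = (\<Union>m. topspace X - BB n m)" unfolding Q_def by blast+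
  define C where "C k = BB (fst (prod_decode k)) (snd (prod_decode k))" for k
  have eq: "(\<Union>n. A n) = (\<Union>k. topspace X - C k)"
  proof
    show "(\<Union>n. A n) \<subseteq> (\<Union>k. topspace X - C k)"
    proof
      fix x assume "x \<in> (\<Union>n. A n)"
      then obtain n m where "x \<in> topspace X - BB n m" using sB(2) by blast
      then show "x \<in> (\<Union>k. topspace X - C k)" unfolding C_def
        by (intro UN_I[of "prod_encode (n,m)"]) auto
    qed
    show "(\<Union>k. topspace X - C k) \<subseteq> (\<Union>n. A n)" unfolding C_def using sB(2) by auto
  qed
  show ?thesis by (rule sig1I[where B=C, OF _ eq]) (simp add: C_def sB(1))
qed

lemma sig1_Un:
  assumes "sig1 X r A" "sig1 X r B"
  shows "sig1 X r (A \<union> B)"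
proof -
  have "(A \<union> B) = (\<Union>n::nat. if n = 0 then A else B)"
    using UN_I[of 0 UNIV _ "\<lambda>n::nat. if n = 0 then A else B"] UN_I[of 1 UNIV _ "\<lambda>n::nat. if n = 0 then A else B"]
    by (auto split: if_splits)
  moreover have "sig1 X r (\<Union>n::nat. if n = 0 then A else B)"
    by (rule sig1_UN[where A="\<lambda>n::nat. if n = 0 then A else B"]) (use assms in auto)
  ultimately show ?thesis by simp
qed

lemma sig1_Int:
  assumes X: "metrizable_space X" and r: "cord r" and "sig1 X r A" "sig1 X r A'"
  shows "sig1 X r (A \<inter> A')"
proof -
  from assms(3) obtain B where sB: "\<forall>n::nat. bsigma X r (B n)" "A = (\<Union>n. topspace X - B n)"
    unfolding sig1_def by blast
  from assms(4) obtain C where tC: "\<forall>n::nat. bsigma X r (C n)" "A' = (\<Union>n. topspace X - C n)"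
    unfolding sig1_def by blast
  define D where "D k = B (fst (prod_decode k)) \<union> C (snd (prod_decode k))" for k
  have eq: "A \<inter> A' = (\<Union>k. topspace X - D k)"
  proof
    show "A \<inter> A' \<subseteq> (\<Union>k. topspace X - D k)"
    proof
      fix x assume "x \<in> A \<inter> A'"
      then obtain n m where "x \<in> topspace X - B n" "x \<in> topspace X - C m" using sB(2) tC(2) by blast
      then show "x \<in> (\<Union>k. topspace X - D k)" unfolding D_def
        by (intro UN_I[of "prod_encode (n,m)"]) auto
    qed
    show "(\<Union>k. topspace X - D k) \<subseteq> A \<inter> A'" unfolding D_def using sB(2) tC(2) by auto
  qed
  show ?thesis by (rule sig1I[where B=D, OF _ eq]) (simp add: D_def bsigma_Un[OF r] sB(1) tC(1))
qed

lemma sig1_of_bsigma: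
  assumes X: "metrizable_space X" and r: "cord r" and A: "bsigma X r A"
  shows "sig1 X r A"
proof (cases "is_one r")
  case True
  then have o: "openin X A" using bsigma_one_iff[OF r True] A by blast
  have "\<exists>C. (\<forall>n::nat. closedin X (C n)) \<and> (\<forall>n. C n \<subseteq> C(Suc n)) \<and> \<Union> (range C) = A"
    by (rule fsigma_in_ascending[THEN iffD1, OF open_imp_fsigma_in[OF X o]])
  then obtain C where C: "\<And>n::nat. closedin X (C n)" "\<Union> (range C) = A" by blast
  have "sig1 X r (\<Union>k::nat. topspace X - (topspace X - C k))"
    by (rule sig1I[where B="\<lambda>k. topspace X - C k"])
       (use C(1) bsigma.base[OF r True] closedin_def in blast, rule refl)
  moreover have "(\<Union>k::nat. topspace X - (topspace X - C k)) = A"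
    using C closedin_subset by auto
  ultimately show ?thesis by simp
next
  case False
  from bsigma_stepE_ex[OF A False] obtain t B where tB: "\<forall>n::nat. cord (t n) \<and> (t n, r) \<in> ordLess \<and> bsigma X (t n) (B n)"
    "A = (\<Union>n. topspace X - B n)" by blast
  show ?thesis
    by (rule sig1I[where B=B, OF _ tB(2)]) (use tB(1) bsigma_mono[OF X _ r ordLess_imp_ordLeq] in blast)
qed

lemma sig1_lower:
  assumes "cord s" "cord r" "(s, r) \<in> ordLess" "sig1 X s A"
  shows "bsigma X r A"
proof -
  have nr: "\<not> is_one r" using less_not_one assms by blast
  from assms(4) obtain B where sB: "\<forall>n::nat. bsigma X s (B n)" "A = (\<Union>n. topspace X - B n)"
    unfolding sig1_def by blast
  have "bsigma X r (\<Union>n. topspace X - B n)"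
    by (rule bsigma_stepI[where B=B, OF assms(2) nr]) (use sB(1) assms in blast)
  then show ?thesis using sB(2) by simp
qed

lemma sig1_mono:
  assumes X: "metrizable_space X" and "cord s" "cord r" "(s, r) \<in> ordLeq" "sig1 X s A"
  shows "sig1 X r A"
proof -
  from assms(5) obtain B where sB: "\<forall>n::nat. bsigma X s (B n)" "A = (\<Union>n. topspace X - B n)"
    unfolding sig1_def by blast
  show ?thesis by (rule sig1I[where B=B, OF _ sB(2)]) (use sB(1) bsigma_mono[OF X assms(2,3,4)] in blast)
qed

lemma one_less_two: assumes "cord r" "is_one r" shows "(r, ord_two) \<in> ordLess"
proof -
  have "\<not> (ord_two, r) \<in> ordLeq" using leq_one[OF cord_two _ assms(2)] not_one_two by blast
  then show ?thesis using not_ordLeq_iff_ordLess cord_WO cord_two assms(1) by blast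
qed

lemma sig1_one_two:
  assumes r: "cord r" "is_one r"
  shows "sig1 X r A \<longleftrightarrow> bsigma X ord_two A"
proof
  assume "sig1 X r A"
  then show "bsigma X ord_two A" by (rule sig1_lower[OF r(1) cord_two one_less_two[OF r]])
next
  assume A: "bsigma X ord_two A"
  from bsigma_stepE_ex[OF A not_one_two] obtain t B where tB: "\<forall>n::nat. cord (t n) \<and> (t n, ord_two) \<in> ordLess \<and> bsigma X (t n) (B n)"
    "A = (\<Union>n. topspace X - B n)" by blast
  have "openin X (B n)" for n
  proof -
    have "is_one (t n)" using less_two_one tB(1) by blast
    then show ?thesis using bsigma_one_iff tB(1) by blast
  qed
  then show "sig1 X r A" by (intro sig1I[where B=B, OF _ tB(2)]) (rule bsigma.base[OF r])
qed

lemma sig1_topspace: "cord r \<Longrightarrow> sig1 X r (topspace X)"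
  by (rule sig1I[where B="\<lambda>_. {}"]) (simp_all add: bsigma_empty)

lemma sig1_empty: "cord r \<Longrightarrow> sig1 X r {}"
  by (rule sig1I[where B="\<lambda>_. topspace X"]) (simp_all add: bsigma_topspace)



context Metric_space
begin

definition inner_set :: "'a set \<Rightarrow> nat \<Rightarrow> 'a set" where
  "inner_set U k = {y\<in>M. \<forall>z\<in>M. d y z < 1 / Suc k \<longrightarrow> z \<in> U}"

lemma inner_set_sub: "inner_set U k \<subseteq> U"
proof
  fix y assume "y \<in> inner_set U k"
  then have "y \<in> M" "\<forall>z\<in>M. d y z < 1 / Suc k \<longrightarrow> z \<in> U" unfolding inner_set_def by auto
  moreover have "d y y < 1 / Suc k" using \<open>y \<in> M\<close> by simp
  ultimately show "y \<in> U" by blast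
qed

lemma inner_set_closed: "closedin mtopology (inner_set U k)"
proof -
  let ?e = "1 / real (Suc k)"
  have "openin mtopology (M - inner_set U k)"
    unfolding openin_mtopology
  proof (intro conjI allI impI)
    show "M - inner_set U k \<subseteq> M" by blast
    fix y assume y: "y \<in> M - inner_set U k"
    then obtain z where z: "z \<in> M" "d y z < ?e" "z \<notin> U" unfolding inner_set_def by auto
    show "\<exists>r>0. mball y r \<subseteq> M - inner_set U k"
    proof (intro exI[of _ "?e - d y z"] conjI)
      show "?e - d y z > 0" using z by simp
      show "mball y (?e - d y z) \<subseteq> M - inner_set U k"
      proof
        fix w assume w: "w \<in> mball y (?e - d y z)"
        then have wM: "w \<in> M" and dw: "d y w < ?e - d y z" by auto
        have "d w z \<le> d w y + d y z" using triangle wM y z(1) by blast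
        also have "\<dots> < ?e" using dw commute by (simp add: commute)
        finally have "d w z < ?e" .
        then show "w \<in> M - inner_set U k" using wM z unfolding inner_set_def by auto
      qed
    qed
  qed
  then show ?thesis unfolding closedin_def by (auto simp: inner_set_def)
qed

lemma inner_set_cover:
  assumes "openin mtopology U" "y \<in> U"
  shows "\<exists>k. \<forall>w\<in>M. d w y < 1 / Suc k \<longrightarrow> w \<in> inner_set U k"
proof -
  obtain e where e: "e > 0" "mball y e \<subseteq> U" using assms openin_mtopology by blast
  have yM: "y \<in> M" using assms openin_mtopology by blast
  obtain k where "inverse (real (Suc k)) < e / 2" using reals_Archimedean[of "e/2"] e(1) by auto
  then have k: "1 / real (Suc k) < e / 2" by (simp add: inverse_eq_divide)
  show ?thesis
  proof (intro exI ballI impI)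
    fix w assume w: "w \<in> M" "d w y < 1 / Suc k"
    have "\<forall>z\<in>M. d w z < 1 / Suc k \<longrightarrow> z \<in> U"
    proof (intro ballI impI)
      fix z assume z: "z \<in> M" "d w z < 1 / Suc k"
      have "d y z \<le> d y w + d w z" using triangle w(1) z(1) yM by blast
      also have "\<dots> < e" using w(2) z(2) k commute[of y w] by linarith
      finally show "z \<in> U" using e(2) z(1) yM by auto
    qed
    then show "w \<in> inner_set U k" using w(1) unfolding inner_set_def by blast
  qed
qed

end

lemma limit_sig1:
  assumes Y: "metrizable_space Y" and r: "cord r"
    and g: "\<And>n U. openin Y U \<Longrightarrow> bsigma X r {x \<in> topspace X. g n x \<in> U}"
    and gY: "\<And>n x. x \<in> topspace X \<Longrightarrow> g n x \<in> topspace Y"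
    and lim: "\<And>x. x \<in> topspace X \<Longrightarrow> limitin Y (\<lambda>n. g n x) (f x) sequentially"
    and U: "openin Y U"
  shows "sig1 X r {x \<in> topspace X. f x \<in> U}"
proof -
  obtain M d where md: "Metric_space M d" "Y = Metric_space.mtopology M d" using Y metrizable_space_def by blast
  interpret m: Metric_space M d by (rule md(1))
  have top: "topspace Y = M" using md by simp
  define F where "F k = m.inner_set U k" for k
  have Fc: "closedin Y (F k)" for k unfolding F_def md(2) by (rule m.inner_set_closed)
  have FU: "F k \<subseteq> U" for k unfolding F_def by (rule m.inner_set_sub)
  define B where "B n k = {x \<in> topspace X. g n x \<in> M - F k}" for n k
  have Bs: "bsigma X r (B n k)" for n k
    unfolding B_def by (rule g) (use Fc[of k] top in \<open>simp add: closedin_def\<close>)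
  define C where "C j = (\<Union>m. B (snd (prod_decode j) + m) (fst (prod_decode j)))" for j
  have Cs: "bsigma X r (C j)" for j unfolding C_def by (rule bsigma_UN[OF r]) (rule Bs)
  have eq: "{x \<in> topspace X. f x \<in> U} = (\<Union>j. topspace X - C j)"
  proof
    show "{x \<in> topspace X. f x \<in> U} \<subseteq> (\<Union>j. topspace X - C j)"
    proof
      fix x assume x: "x \<in> {x \<in> topspace X. f x \<in> U}"
      then have xX: "x \<in> topspace X" and fU: "f x \<in> U" by auto
      have Um: "openin m.mtopology U" using U md(2) by simp
      obtain k where k: "\<forall>w\<in>M. d w (f x) < 1 / Suc k \<longrightarrow> w \<in> F k"
        using m.inner_set_cover[OF Um fU] unfolding F_def by blast
      have "limitin m.mtopology (\<lambda>n. g n x) (f x) sequentially" using lim[OF xX] md(2) by simp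
      then have "eventually (\<lambda>n. g n x \<in> M \<and> d (g n x) (f x) < 1 / Suc k) sequentially"
        unfolding m.limitin_metric by simp
      then obtain N where N: "\<forall>n\<ge>N. g n x \<in> M \<and> d (g n x) (f x) < 1 / Suc k"
        unfolding eventually_sequentially by blast
      have "x \<notin> C (prod_encode (k, N))"
      proof
        assume "x \<in> C (prod_encode (k, N))"
        then obtain m where "x \<in> B (N + m) k" unfolding C_def by auto
        moreover have "g (N + m) x \<in> F k" using N k by auto
        ultimately show False unfolding B_def by auto
      qed
      then show "x \<in> (\<Union>j. topspace X - C j)" using xX by blast
    qed
    show "(\<Union>j. topspace X - C j) \<subseteq> {x \<in> topspace X. f x \<in> U}"
    proof
      fix x assume "x \<in> (\<Union>j. topspace X - C j)"
      then obtain j where xX: "x \<in> topspace X" and xC: "x \<notin> C j" by blast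
      let ?k = "fst (prod_decode j)" and ?N = "snd (prod_decode j)"
      have "g n x \<in> F ?k" if "n \<ge> ?N" for n
      proof -
        obtain m where n: "n = ?N + m" using \<open>n \<ge> ?N\<close> le_Suc_ex by blast
        have "x \<notin> B n ?k" using xC unfolding C_def n by blast
        then show ?thesis using gY[OF xX, of n] top xX unfolding B_def by auto
      qed
      then have ev: "eventually (\<lambda>n. g n x \<in> F ?k) sequentially"
        unfolding eventually_sequentially by blast
      have "f x \<in> F ?k" by (rule limitin_closedin[OF lim[OF xX] Fc ev]) simp
      then show "x \<in> {x \<in> topspace X. f x \<in> U}" using FU xX by blast
    qed
  qed
  show ?thesis unfolding eq by (rule sig1_UN) (rule sig1_compl[OF Cs])
qed



lemma finite_dep:
  assumes "finite I"
    and CX: "P (topspace X)" and Ce: "P {}"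
    and Un: "\<And>a b. P a \<Longrightarrow> P b \<Longrightarrow> P (a \<union> b)" and Int: "\<And>a b. P a \<Longrightarrow> P b \<Longrightarrow> P (a \<inter> b)"
    and D: "\<And>c. c \<in> I \<Longrightarrow> P (topspace X \<inter> D c) \<and> P (topspace X - D c)"
  shows "P {x \<in> topspace X. \<phi> (\<lambda>c. c \<in> I \<and> x \<in> D c)}"
  using assms(1) D
proof (induction I arbitrary: \<phi> rule: finite_induct)
  case empty
  show ?case
  proof (cases "\<phi> (\<lambda>c. False)")
    case True then have "{x \<in> topspace X. \<phi> (\<lambda>c. c \<in> {} \<and> x \<in> D c)} = topspace X" by auto
    then show ?thesis using CX by (simp only:)
  next
    case False then have "{x \<in> topspace X. \<phi> (\<lambda>c. c \<in> {} \<and> x \<in> D c)} = {}" by auto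
    then show ?thesis using Ce by (simp only:)
  qed
next
  case (insert i I)
  define S1 where "S1 = {x \<in> topspace X. (\<lambda>v. \<phi> (v(i := True))) (\<lambda>c. c \<in> I \<and> x \<in> D c)}"
  define S2 where "S2 = {x \<in> topspace X. (\<lambda>v. \<phi> (v(i := False))) (\<lambda>c. c \<in> I \<and> x \<in> D c)}"
  have P1: "P S1" unfolding S1_def by (rule insert.IH) (use insert.prems in auto)
  have P2: "P S2" unfolding S2_def by (rule insert.IH) (use insert.prems in auto)
  have e1: "(\<lambda>c. c \<in> insert i I \<and> x \<in> D c) = (\<lambda>c. c \<in> I \<and> x \<in> D c)(i := True)" if "x \<in> D i" for x
    using that insert.hyps(2) by (auto simp: fun_eq_iff)
  have e2: "(\<lambda>c. c \<in> insert i I \<and> x \<in> D c) = (\<lambda>c. c \<in> I \<and> x \<in> D c)(i := False)" if "x \<notin> D i" for x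
    using that insert.hyps(2) by (auto simp: fun_eq_iff)
  have "{x \<in> topspace X. \<phi> (\<lambda>c. c \<in> insert i I \<and> x \<in> D c)} = ((topspace X \<inter> D i) \<inter> S1) \<union> ((topspace X - D i) \<inter> S2)"
  proof (rule set_eqI)
    fix x
    show "x \<in> {x \<in> topspace X. \<phi> (\<lambda>c. c \<in> insert i I \<and> x \<in> D c)} \<longleftrightarrow> x \<in> ((topspace X \<inter> D i) \<inter> S1) \<union> ((topspace X - D i) \<inter> S2)"
    proof (cases "x \<in> D i")
      case True then show ?thesis unfolding S1_def S2_def using e1[OF True] by auto
    next
      case False then show ?thesis unfolding S1_def S2_def using e2[OF False] by auto
    qed
  qed
  moreover have "P (topspace X \<inter> D i)" "P (topspace X - D i)" using insert.prems by auto
  ultimately show ?case using P1 P2 Un Int by simp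
qed

lemma finite_max:
  assumes "finite I" "cord r" "\<not> is_one r"
    and "\<And>c. c \<in> I \<Longrightarrow> cord (e c) \<and> (e c, r) \<in> ordLess"
  shows "\<exists>t. cord t \<and> (t, r) \<in> ordLess \<and> (\<forall>c\<in>I. (e c, t) \<in> ordLeq)"
  using assms(1,4)
proof (induction I rule: finite_induct)
  case empty
  then show ?case using cord_one0 one0_less[OF assms(2,3)] by blast
next
  case (insert i I)
  then obtain t where t: "cord t" "(t, r) \<in> ordLess" "\<forall>c\<in>I. (e c, t) \<in> ordLeq" by auto
  have ei: "cord (e i)" "(e i, r) \<in> ordLess" using insert.prems by auto
  obtain u where u: "u = t \<or> u = e i" "(t, u) \<in> ordLeq" "(e i, u) \<in> ordLeq" using max2[OF t(1) ei(1)] by blast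
  have "cord u" "(u, r) \<in> ordLess" using u(1) t ei by auto
  moreover have "\<forall>c\<in>insert i I. (e c, u) \<in> ordLeq" using t(3) u(2,3) ordLeq_transitive by blast
  ultimately show ?case by blast
qed



lemma sig1_repr:
  assumes r: "cord r" "\<not> is_one r" and A: "sig1 X r A"
  shows "\<exists>\<eta> S. (\<forall>i j::nat. cord (\<eta> i j) \<and> (\<eta> i j, r) \<in> ordLess \<and> bsigma X (\<eta> i j) (S i j))
            \<and> A = {x \<in> topspace X. \<exists>i::nat. \<forall>j::nat. x \<in> S i j}"
proof -
  from A obtain B where B: "\<forall>n::nat. bsigma X r (B n)" "A = (\<Union>n. topspace X - B n)"
    unfolding sig1_def by blast
  define Q where "Q i s S \<longleftrightarrow> (\<forall>m::nat. cord (s m) \<and> (s m, r) \<in> ordLess \<and> bsigma X (s m) (S m))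
       \<and> B i = (\<Union>m. topspace X - S m)" for i s S
  have ex: "\<exists>s S. Q i s S" for i
    unfolding Q_def by (rule bsigma_stepE_ex[OF B(1)[rule_format] r(2)])
  define \<eta> where "\<eta> i = (SOME s. \<exists>S. Q i s S)" for i
  have ex2: "\<exists>S. Q i (\<eta> i) S" for i unfolding \<eta>_def by (rule someI_ex[of "\<lambda>s. \<exists>S. Q i s S", OF ex])
  define S where "S i = (SOME S. Q i (\<eta> i) S)" for i
  have "Q i (\<eta> i) (S i)" for i unfolding S_def by (rule someI_ex[of "\<lambda>S. Q i (\<eta> i) S", OF ex2])
  then have h: "\<And>i m. cord (\<eta> i m) \<and> (\<eta> i m, r) \<in> ordLess \<and> bsigma X (\<eta> i m) (S i m)"
     "\<And>i. B i = (\<Union>m. topspace X - S i m)" unfolding Q_def by blast+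
  have sub: "S i m \<subseteq> topspace X" for i m using h(1) bsigma_sub by blast
  have "A = {x \<in> topspace X. \<exists>i::nat. \<forall>j::nat. x \<in> S i j}"
    unfolding B(2) h(2) using sub by (auto; blast)
  then show ?thesis by (intro exI[of _ \<eta>] exI[of _ S]) (use h(1) in blast)
qed

lemma repr_family:
  assumes r: "cord r" "\<not> is_one r" and A: "\<And>a. sig1 X r (A a)"
  shows "\<exists>\<eta> S. \<forall>a. (\<forall>i j::nat. cord (\<eta> a i j) \<and> (\<eta> a i j, r) \<in> ordLess \<and> bsigma X (\<eta> a i j) (S a i j))
            \<and> A a = {x \<in> topspace X. \<exists>i::nat. \<forall>j::nat. x \<in> S a i j}"
proof -
  define Q where "Q a p \<longleftrightarrow> (\<forall>i j::nat. cord (fst p i j) \<and> (fst p i j, r) \<in> ordLess \<and> bsigma X (fst p i j) (snd p i j))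
            \<and> A a = {x \<in> topspace X. \<exists>i::nat. \<forall>j::nat. x \<in> snd p i j}" for a p
  have ex: "\<exists>p. Q a p" for a
  proof -
    obtain \<eta> S where "(\<forall>i j::nat. cord (\<eta> i j) \<and> (\<eta> i j, r) \<in> ordLess \<and> bsigma X (\<eta> i j) (S i j))
            \<and> A a = {x \<in> topspace X. \<exists>i::nat. \<forall>j::nat. x \<in> S i j}" using sig1_repr[OF r A] by blast
    then have "Q a (\<eta>, S)" unfolding Q_def by simp
    then show ?thesis by blast
  qed
  define p where "p a = (SOME p. Q a p)" for a
  have "Q a (p a)" for a unfolding p_def by (rule someI_ex[of "\<lambda>p. Q a p", OF ex])
  then have "\<forall>a. (\<forall>i j::nat. cord (fst (p a) i j) \<and> (fst (p a) i j, r) \<in> ordLess \<and> bsigma X (fst (p a) i j) (snd (p a) i j))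
            \<and> A a = {x \<in> topspace X. \<exists>i::nat. \<forall>j::nat. x \<in> snd (p a) i j}" unfolding Q_def by blast
  then show ?thesis by (intro exI[of _ "\<lambda>a. fst (p a)"] exI[of _ "\<lambda>a. snd (p a)"])
qed

definition Lf :: "nat \<Rightarrow> nat \<Rightarrow> (nat \<times> nat \<times> nat \<Rightarrow> bool) \<Rightarrow> nat" where
  "Lf n m P = (if m \<le> n \<and> (\<exists>l\<le>n. \<forall>j\<le>n. P (m,l,j)) then (LEAST l. l \<le> n \<and> (\<forall>j\<le>n. P (m,l,j))) else 0)"

definition af :: "(nat \<Rightarrow> 'b) \<Rightarrow> nat \<Rightarrow> nat \<Rightarrow> (nat \<times> nat \<times> nat \<Rightarrow> bool) \<Rightarrow> 'b" where
  "af y n m P = y (fst (prod_decode (Lf n m P)))"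

definition good :: "('b \<Rightarrow> 'b \<Rightarrow> real) \<Rightarrow> (nat \<Rightarrow> 'b) \<Rightarrow> nat \<Rightarrow> (nat \<times> nat \<times> nat \<Rightarrow> bool) \<Rightarrow> nat \<Rightarrow> bool" where
  "good d y n P m \<longleftrightarrow> (\<forall>j\<le>m. d (af y n j P) (af y n m P) < 2 / Suc j)"

definition Mf :: "('b \<Rightarrow> 'b \<Rightarrow> real) \<Rightarrow> (nat \<Rightarrow> 'b) \<Rightarrow> nat \<Rightarrow> (nat \<times> nat \<times> nat \<Rightarrow> bool) \<Rightarrow> nat" where
  "Mf d y n P = (GREATEST m. m \<le> n \<and> good d y n P m)"

definition hf :: "('b \<Rightarrow> 'b \<Rightarrow> real) \<Rightarrow> (nat \<Rightarrow> 'b) \<Rightarrow> nat \<Rightarrow> (nat \<times> nat \<times> nat \<Rightarrow> bool) \<Rightarrow> 'b" where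
  "hf d y n P = af y n (Mf d y n P) P"

definition Ibox :: "nat \<Rightarrow> (nat \<times> nat \<times> nat) set" where
  "Ibox n = {..n} \<times> {..n} \<times> {..n}"

lemma finite_Ibox: "finite (Ibox n)" unfolding Ibox_def by simp

lemma Lf_cong: assumes "\<forall>c\<in>Ibox n. P c = P' c" shows "Lf n m P = Lf n m P'"
proof (cases "m \<le> n")
  case True
  have "(\<lambda>l. l \<le> n \<and> (\<forall>j\<le>n. P (m,l,j))) = (\<lambda>l. l \<le> n \<and> (\<forall>j\<le>n. P' (m,l,j)))"
    using assms True unfolding Ibox_def by (auto simp: fun_eq_iff)
  then show ?thesis unfolding Lf_def by (simp add: fun_eq_iff) metis
next
  case False then show ?thesis unfolding Lf_def by simp
qed

lemma hf_cong: assumes "\<forall>c\<in>Ibox n. P c = P' c" shows "hf d y n P = hf d y n P'"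
proof -
  have a: "af y n m P = af y n m P'" for m unfolding af_def using Lf_cong[OF assms] by simp
  have "good d y n P = good d y n P'" unfolding good_def a by (simp add: fun_eq_iff)
  then have "Mf d y n P = Mf d y n P'" unfolding Mf_def by simp
  then show ?thesis unfolding hf_def using a by simp
qed



lemma core_stable:
  assumes ms: "Metric_space M d"
    and yM: "\<And>k. y k \<in> M" and fxM: "fx \<in> M"
    and dense: "\<And>e. e > 0 \<Longrightarrow> \<exists>k. d (y k) fx < e"
    and SU: "\<And>m k. (\<exists>i::nat. \<forall>j::nat. P (m, prod_encode (k, i), j)) \<longleftrightarrow> d (y k) fx < 1 / Suc m"
  shows "\<exists>b. b \<in> M \<and> d b fx < 1 / Suc m \<and> eventually (\<lambda>n. af y n m P = b) sequentially"
proof -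
  obtain k where k: "d (y k) fx < 1 / Suc m" using dense[of "1 / Suc m"] by auto
  then obtain i where i: "\<forall>j. P (m, prod_encode (k, i), j)" using SU by blast
  define l0 where "l0 = (LEAST l. \<forall>j. P (m, l, j))"
  have l0: "\<forall>j. P (m, l0, j)" unfolding l0_def by (rule LeastI[of _ "prod_encode (k,i)"]) (rule i)
  have below: "\<not> (\<forall>j. P (m, l, j))" if "l < l0" for l
    using not_less_Least[OF that[unfolded l0_def]] unfolding l0_def by blast
  define jj where "jj l = (SOME j. \<not> P (m, l, j))" for l
  have jj: "\<not> P (m, l, jj l)" if "l < l0" for l
    unfolding jj_def using below[OF that] by (metis (mono_tags, lifting) someI_ex)
  define N where "N = m + l0 + (\<Sum>l<l0. jj l)"
  have Lf_eq: "Lf n m P = l0" if "n \<ge> N" for n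
  proof -
    have mn: "m \<le> n" "l0 \<le> n" using that unfolding N_def by auto
    have c: "l0 \<le> n \<and> (\<forall>j\<le>n. P (m, l0, j))" using mn l0 by blast
    have jjn: "jj l \<le> n" if "l < l0" for l
    proof -
      have "jj l \<le> (\<Sum>l<l0. jj l)" by (rule member_le_sum) (use that in auto)
      then show ?thesis using \<open>n \<ge> N\<close> unfolding N_def by linarith
    qed
    have "(LEAST l. l \<le> n \<and> (\<forall>j\<le>n. P (m, l, j))) = l0"
    proof (rule Least_equality)
      show "l0 \<le> n \<and> (\<forall>j\<le>n. P (m, l0, j))" by (rule c)
      fix l assume l: "l \<le> n \<and> (\<forall>j\<le>n. P (m, l, j))"
      show "l0 \<le> l"
      proof (rule ccontr)
        assume "\<not> l0 \<le> l" then have "l < l0" by simp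
        then show False using jj[OF \<open>l < l0\<close>] jjn[OF \<open>l < l0\<close>] l by blast
      qed
    qed
    then show ?thesis unfolding Lf_def using mn c by auto
  qed
  define b where "b = y (fst (prod_decode l0))"
  obtain k' i' where ki: "prod_decode l0 = (k', i')" by (cases "prod_decode l0")
  have "l0 = prod_encode (k', i')" using ki by (metis prod_decode_inverse)
  then have "d (y k') fx < 1 / Suc m" using SU[of m k'] l0 by blast
  then have "d b fx < 1 / Suc m" unfolding b_def ki by simp
  moreover have "eventually (\<lambda>n. af y n m P = b) sequentially"
    unfolding eventually_sequentially af_def b_def using Lf_eq by auto
  ultimately show ?thesis using yM b_def by blast
qed

lemma core_limit:
  assumes ms: "Metric_space M d" and fxM: "fx \<in> M" and yM: "\<And>k. y k \<in> M"
    and st: "\<And>m. \<exists>b. b \<in> M \<and> d b fx < 1 / Suc m \<and> eventually (\<lambda>n. af y n m P = b) sequentially"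
    and e: "e > 0"
  shows "eventually (\<lambda>n. hf d y n P \<in> M \<and> d (hf d y n P) fx < e) sequentially"
proof -
  interpret ms: Metric_space M d by (rule ms)
  obtain m where "inverse (real (Suc m)) < e / 3" using reals_Archimedean[of "e/3"] e by auto
  then have m: "3 / real (Suc m) < e" by (simp add: inverse_eq_divide field_simps)
  define bb where "bb j = (SOME b. b \<in> M \<and> d b fx < 1 / Suc j \<and> eventually (\<lambda>n. af y n j P = b) sequentially)" for j
  have bb: "bb j \<in> M \<and> d (bb j) fx < 1 / Suc j \<and> eventually (\<lambda>n. af y n j P = bb j) sequentially" for j
    unfolding bb_def by (rule someI_ex[OF st])
  have ev: "eventually (\<lambda>n. \<forall>j\<in>{..m}. af y n j P = bb j) sequentially"
    by (rule eventually_ball_finite) (use bb in auto)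
  have hM: "hf d y n P \<in> M" for n unfolding hf_def af_def using yM by simp
  show ?thesis
  proof (rule eventually_mono[OF eventually_conj[OF ev eventually_ge_at_top[of m]]])
    fix n assume n: "(\<forall>j\<in>{..m}. af y n j P = bb j) \<and> m \<le> n"
    have gm: "good d y n P m" unfolding good_def
    proof (intro allI impI)
      fix j assume j: "j \<le> m"
      have "d (af y n j P) (af y n m P) = d (bb j) (bb m)" using n j by auto
      also have "\<dots> \<le> d (bb j) fx + d fx (bb m)" using ms.triangle bb fxM by blast
      also have "\<dots> < 1 / Suc j + 1 / Suc m" using bb[of j] bb[of m] ms.commute[of fx "bb m"] by linarith
      also have "\<dots> \<le> 2 / Suc j"
      proof -
        have "1 / real (Suc m) \<le> 1 / real (Suc j)" using j by (intro divide_left_mono) auto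
        then show ?thesis by simp
      qed
      finally show "d (af y n j P) (af y n m P) < 2 / Suc j" .
    qed
    let ?M = "Mf d y n P"
    have bound: "\<And>k. k \<le> n \<and> good d y n P k \<Longrightarrow> k \<le> n" by blast
    have M1: "?M \<le> n \<and> good d y n P ?M" unfolding Mf_def
      by (rule GreatestI_nat[of _ m n]) (use gm n bound in auto)
    have M2: "m \<le> ?M" unfolding Mf_def
      by (rule Greatest_le_nat[of _ m n]) (use gm n bound in auto)
    have d1: "d (af y n m P) (af y n ?M P) < 2 / Suc m" using M1 M2 unfolding good_def by blast
    have am: "af y n m P = bb m" using n by auto
    have "d (hf d y n P) fx \<le> d (hf d y n P) (bb m) + d (bb m) fx"
      using ms.triangle hM bb fxM by blast
    also have "\<dots> < 2 / Suc m + 1 / Suc m"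
      using d1 am bb[of m] ms.commute[of "af y n m P" "af y n ?M P"] unfolding hf_def by auto
    also have "\<dots> = 3 / Suc m" by (simp add: field_simps)
    also have "\<dots> < e" by (rule m)
    finally show "hf d y n P \<in> M \<and> d (hf d y n P) fx < e" using hM by blast
  qed
qed



lemma core:
  assumes X: "metrizable_space X" and Y: "metrizable_space Y" and sep: "separable_space Y"
    and r: "cord r" "\<not> is_one r" and fY: "f ` topspace X \<subseteq> topspace Y"
    and fm: "\<And>U. openin Y U \<Longrightarrow> sig1 X r {x \<in> topspace X. f x \<in> U}"
  shows "\<exists>h. (\<forall>n. delta0_fun X Y r (h n) \<and> (\<exists>t. cord t \<and> (t, r) \<in> ordLess \<and> (\<forall>A. sig1 X t {x \<in> topspace X. h n x \<in> A})))
           \<and> (\<forall>x\<in>topspace X. limitin Y (\<lambda>n. h n x) (f x) sequentially)"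
proof (cases "topspace X = {}")
  case True
  have "delta0_fun X Y r (\<lambda>x. f x)" unfolding delta0_fun_def True by (simp add: bsigma_empty[OF r(1)])
  moreover have "\<forall>A. sig1 X one0 {x \<in> topspace X. f x \<in> A}" unfolding True using sig1_empty[OF cord_one0] by simp
  ultimately show ?thesis using cord_one0 one0_less[OF r] True by (intro exI[of _ "\<lambda>n. f"]) auto
next
  case False
  obtain M d where md: "Metric_space M d" "Y = Metric_space.mtopology M d" using Y metrizable_space_def by blast
  interpret ms: Metric_space M d by (rule md(1))
  have top: "topspace Y = M" using md by simp
  obtain C where C: "countable C" "C \<subseteq> M" "ms.mtopology closure_of C = M"
    using sep unfolding separable_space_def md(2) by auto
  have "M \<noteq> {}" using False fY top by auto
  then have Cne: "C \<noteq> {}" using C(3) by auto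
  define y where "y = from_nat_into C"
  have yM: "y k \<in> M" for k unfolding y_def using from_nat_into[OF Cne] C(2) by blast
  have dense: "\<exists>k. d (y k) p < e" if pM: "p \<in> M" and ep: "e > 0" for p e
  proof -
    have "p \<in> ms.mtopology closure_of C" using C(3) pM by simp
    then obtain z where "z \<in> C" "z \<in> ms.mball p e" using ep unfolding ms.metric_closure_of by blast
    moreover obtain k where "z = y k" using \<open>z \<in> C\<close> range_from_nat_into[OF Cne C(1)] unfolding y_def by (metis imageE)
    ultimately show ?thesis using ms.commute by auto
  qed
  define U where "U a = ms.mball (y (snd a)) (1 / Suc (fst a))" for a :: "nat \<times> nat"
  have fmU: "sig1 X r {x \<in> topspace X. f x \<in> U a}" for a
    by (rule fm) (simp add: U_def md(2))
  obtain \<eta> S where \<eta>S: "\<forall>a. (\<forall>i j::nat. cord (\<eta> a i j) \<and> (\<eta> a i j, r) \<in> ordLess \<and> bsigma X (\<eta> a i j) (S a i j))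
            \<and> {x \<in> topspace X. f x \<in> U a} = {x \<in> topspace X. \<exists>i::nat. \<forall>j::nat. x \<in> S a i j}"
    using repr_family[where A="\<lambda>a. {x \<in> topspace X. f x \<in> U a}", OF r fmU] by blast
  define D where "D c = S (fst c, fst (prod_decode (fst (snd c)))) (snd (prod_decode (fst (snd c)))) (snd (snd c))" for c :: "nat \<times> nat \<times> nat"
  define e where "e c = \<eta> (fst c, fst (prod_decode (fst (snd c)))) (snd (prod_decode (fst (snd c)))) (snd (snd c))" for c :: "nat \<times> nat \<times> nat"
  have De: "cord (e c) \<and> (e c, r) \<in> ordLess \<and> bsigma X (e c) (D c)" for c
    unfolding D_def e_def using \<eta>S by blast
  have Dsub: "D c \<subseteq> topspace X" for c using De bsigma_sub by blast
  define h where "h n x = hf d y n (\<lambda>c. c \<in> Ibox n \<and> x \<in> D c)" for n x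
  have hM: "h n x \<in> M" for n x unfolding h_def hf_def af_def using yM by simp
  have hmeas: "Q {x \<in> topspace X. h n x \<in> A}"
    if "Q (topspace X)" "Q {}" "\<And>a b. Q a \<Longrightarrow> Q b \<Longrightarrow> Q (a \<union> b)" "\<And>a b. Q a \<Longrightarrow> Q b \<Longrightarrow> Q (a \<inter> b)"
       "\<And>c. c \<in> Ibox n \<Longrightarrow> Q (topspace X \<inter> D c) \<and> Q (topspace X - D c)" for Q n A
    unfolding h_def by (rule finite_dep[OF finite_Ibox that, where \<phi>="\<lambda>v. hf d y n v \<in> A"])
  have delta: "delta0_fun X Y r (h n)" for n
    unfolding delta0_fun_def
  proof (intro conjI allI impI)
    show "h n ` topspace X \<subseteq> topspace Y" using hM top by auto
    fix A
    show "bsigma X r {x \<in> topspace X. h n x \<in> A}"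
    proof (rule hmeas)
      show "bsigma X r (topspace X)" by (rule bsigma_topspace[OF r(1)])
      show "bsigma X r {}" by (rule bsigma_empty[OF r(1)])
      show "bsigma X r (a \<union> b)" if "bsigma X r a" "bsigma X r b" for a b by (rule bsigma_Un[OF r(1) that])
      show "bsigma X r (a \<inter> b)" if "bsigma X r a" "bsigma X r b" for a b by (rule bsigma_Int[OF X r(1) that])
      fix c
      have "topspace X \<inter> D c = D c" using Dsub by blast
      then show "bsigma X r (topspace X \<inter> D c) \<and> bsigma X r (topspace X - D c)"
        using bsigma_mono[OF X _ r(1) ordLess_imp_ordLeq] bsigma_compl_lower[OF _ r(1)] De[of c] by auto
    qed
  qed
  have lower: "\<exists>t. cord t \<and> (t, r) \<in> ordLess \<and> (\<forall>A. sig1 X t {x \<in> topspace X. h n x \<in> A})" for n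
  proof -
    obtain t where t: "cord t" "(t, r) \<in> ordLess" "\<forall>c\<in>Ibox n. (e c, t) \<in> ordLeq"
      using finite_max[where e=e, OF finite_Ibox r] De by blast
    have "sig1 X t {x \<in> topspace X. h n x \<in> A}" for A
    proof (rule hmeas)
      show "sig1 X t (topspace X)" by (rule sig1_topspace[OF t(1)])
      show "sig1 X t {}" by (rule sig1_empty[OF t(1)])
      show "sig1 X t (a \<union> b)" if "sig1 X t a" "sig1 X t b" for a b by (rule sig1_Un[OF that])
      show "sig1 X t (a \<inter> b)" if "sig1 X t a" "sig1 X t b" for a b by (rule sig1_Int[OF X t(1) that])
      fix c assume c: "c \<in> Ibox n"
      have b: "bsigma X t (D c)" using bsigma_mono[OF X _ t(1)] De[of c] t(3) c by blast
      have "topspace X \<inter> D c = D c" using Dsub by blast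
      then show "sig1 X t (topspace X \<inter> D c) \<and> sig1 X t (topspace X - D c)"
        using sig1_of_bsigma[OF X t(1) b] sig1_compl[OF b] by simp
    qed
    then show ?thesis using t by blast
  qed
  have conv: "limitin Y (\<lambda>n. h n x) (f x) sequentially" if xX: "x \<in> topspace X" for x
  proof -
    define P where "P c = (x \<in> D c)" for c
    have hx: "h n x = hf d y n P" for n unfolding h_def P_def by (rule hf_cong) auto
    have fxM: "f x \<in> M" using fY xX top by auto
    have SU: "(\<exists>i::nat. \<forall>j::nat. P (m, prod_encode (k, i), j)) \<longleftrightarrow> d (y k) (f x) < 1 / Suc m" for m k
    proof -
      have "(\<exists>i::nat. \<forall>j::nat. P (m, prod_encode (k, i), j)) \<longleftrightarrow> (\<exists>i::nat. \<forall>j::nat. x \<in> S (m, k) i j)"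
        unfolding P_def D_def by simp
      also have "\<dots> \<longleftrightarrow> f x \<in> U (m, k)" using \<eta>S xX by blast
      also have "\<dots> \<longleftrightarrow> d (y k) (f x) < 1 / Suc m" unfolding U_def using yM fxM by simp
      finally show ?thesis .
    qed
    have st: "\<exists>b. b \<in> M \<and> d b (f x) < 1 / Suc m \<and> eventually (\<lambda>n. af y n m P = b) sequentially" for m
      by (rule core_stable[OF md(1) yM fxM _ SU]) (rule dense[OF fxM])
    have "limitin ms.mtopology (\<lambda>n. hf d y n P) (f x) sequentially"
      unfolding ms.limitin_metric using fxM core_limit[OF md(1) fxM yM st] by blast
    then show ?thesis unfolding hx md(2) .
  qed
  show ?thesis using delta lower conv by blast
qed



lemma baire_img: "baire_cls X Y r f \<Longrightarrow> f ` topspace X \<subseteq> topspace Y"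
  by (cases rule: baire_cls.cases) auto

lemma baire_sig1:
  "baire_cls X Y r f \<Longrightarrow> metrizable_space Y \<Longrightarrow> \<forall>U. openin Y U \<longrightarrow> sig1 X r {x \<in> topspace X. f x \<in> U}"
proof (induction rule: baire_cls.induct)
  case (base r f X Y)
  then show ?case using sig1_one_two[OF base(1,2)] by blast
next
  case (step r f X Y s g)
  have MY: "metrizable_space Y" using step.prems by blast
  have H: "cord (s n)" "(s n, r) \<in> ordLess" "baire_cls X Y (s n) (g n)"
     "\<forall>U. openin Y U \<longrightarrow> sig1 X (s n) {x \<in> topspace X. g n x \<in> U}" for n
    using step MY by auto
  have lim: "\<forall>x\<in>topspace X. limitin Y (\<lambda>n. g n x) (f x) sequentially" using step by blast
  have cr: "cord r" using step by blast
  show ?case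
  proof (intro allI impI)
    fix U assume U: "openin Y U"
    show "sig1 X r {x \<in> topspace X. f x \<in> U}"
    proof (rule limit_sig1[OF MY cr, where g=g])
      show "bsigma X r {x \<in> topspace X. g n x \<in> V}" if "openin Y V" for n V
        using sig1_lower[OF H(1) cr H(2)] H(4) that by blast
      show "g n x \<in> topspace Y" if "x \<in> topspace X" for n x
        using baire_img[OF H(3)] that by blast
      show "limitin Y (\<lambda>n. g n x) (f x) sequentially" if "x \<in> topspace X" for x
        using lim that by blast
      show "openin Y U" by (rule U)
    qed
  qed
qed

lemma sig1_baire:
  assumes X: "metrizable_space X" and Y: "metrizable_space Y" and sep: "separable_space Y"
  shows "cord r \<Longrightarrow> f ` topspace X \<subseteq> topspace Y \<Longrightarrow> (\<And>U. openin Y U \<Longrightarrow> sig1 X r {x \<in> topspace X. f x \<in> U})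
         \<Longrightarrow> baire_cls X Y r f"
proof (induction r arbitrary: f rule: wf_induct[OF wf_ordLess])
  case (1 r)
  show ?case
  proof (cases "is_one r")
    case True
    show ?thesis
      by (rule baire_cls.base[OF 1(2) True 1(3)]) (use 1(4) sig1_one_two[OF 1(2) True] in blast)
  next
    case False
    obtain h where h: "\<forall>n. delta0_fun X Y r (h n) \<and> (\<exists>t. cord t \<and> (t, r) \<in> ordLess \<and> (\<forall>A. sig1 X t {x \<in> topspace X. h n x \<in> A}))"
      "\<forall>x\<in>topspace X. limitin Y (\<lambda>n. h n x) (f x) sequentially"
      using core[OF X Y sep 1(2) False 1(3) 1(4)] by blast
    define t where "t n = (SOME t. cord t \<and> (t, r) \<in> ordLess \<and> (\<forall>A. sig1 X t {x \<in> topspace X. h n x \<in> A}))" for n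
    have t: "cord (t n) \<and> (t n, r) \<in> ordLess \<and> (\<forall>A. sig1 X (t n) {x \<in> topspace X. h n x \<in> A})" for n
      unfolding t_def by (rule someI_ex) (use h(1) in blast)
    have hb: "baire_cls X Y (t n) (h n)" for n
    proof (rule 1(1)[rule_format])
      show "(t n, r) \<in> ordLess" using t by blast
      show "cord (t n)" using t by blast
      show "h n ` topspace X \<subseteq> topspace Y" using h(1) unfolding delta0_fun_def by blast
      show "sig1 X (t n) {x \<in> topspace X. h n x \<in> U}" for U using t by blast
    qed
    show ?thesis
      by (rule baire_cls.step[OF 1(2) False 1(3), where s=t and g=h]) (use t hb h(2) in auto)
  qed
qed



theorem mainTheorem6:
  fixes X :: "'a topology" and Y :: "'b topology" and r :: "nat rel" and f :: "'a \<Rightarrow> 'b"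
  assumes "metrizable_space X" and "metrizable_space Y" and "separable_space Y"
    and "cord r"
    and "f ` topspace X \<subseteq> topspace Y"
  shows "((\<exists>g. (\<forall>n. delta0_fun X Y r (g n)) \<and>
             (\<forall>x\<in>topspace X. limitin Y (\<lambda>n. g n x) (f x) sequentially))
          \<longrightarrow> baire_cls X Y r f)
       \<and> ((\<not> is_one r \<and> baire_cls X Y r f) \<longrightarrow>
          (\<exists>g. (\<forall>n. delta0_fun X Y r (g n)) \<and>
             (\<forall>x\<in>topspace X. limitin Y (\<lambda>n. g n x) (f x) sequentially)))"
proof (intro conjI impI)
  assume "\<exists>g. (\<forall>n. delta0_fun X Y r (g n)) \<and> (\<forall>x\<in>topspace X. limitin Y (\<lambda>n. g n x) (f x) sequentially)"
  then obtain g where g: "\<forall>n. delta0_fun X Y r (g n)" "\<forall>x\<in>topspace X. limitin Y (\<lambda>n. g n x) (f x) sequentially"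
    by blast
  have opensig: "bsigma Y r V" if "openin Y V" for V
  proof (cases "is_one r")
    case True then show ?thesis by (rule bsigma.base[OF assms(4) _ that])
  next
    case False
    have "bsigma Y one0 V" by (rule bsigma.base[OF cord_one0 is_one_one0 that])
    then show ?thesis
      using bsigma_mono[OF assms(2) cord_one0 assms(4) ordLess_imp_ordLeq[OF one0_less[OF assms(4) False]]] by blast
  qed
  show "baire_cls X Y r f"
  proof (rule sig1_baire[OF assms(1,2,3,4,5)])
    fix U assume U: "openin Y U"
    show "sig1 X r {x \<in> topspace X. f x \<in> U}"
    proof (rule limit_sig1[OF assms(2,4), where g=g])
      show "bsigma X r {x \<in> topspace X. g n x \<in> V}" if "openin Y V" for n V
        using g(1) opensig[OF that] unfolding delta0_fun_def by blast
      show "g n x \<in> topspace Y" if "x \<in> topspace X" for n x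
        using g(1) that unfolding delta0_fun_def by blast
      show "limitin Y (\<lambda>n. g n x) (f x) sequentially" if "x \<in> topspace X" for x
        using g(2) that by blast
      show "openin Y U" by (rule U)
    qed
  qed
next
  assume a: "\<not> is_one r \<and> baire_cls X Y r f"
  have "\<And>U. openin Y U \<Longrightarrow> sig1 X r {x \<in> topspace X. f x \<in> U}"
    using baire_sig1[OF conjunct2[OF a] assms(2)] by blast
  from core[OF assms(1,2,3,4) conjunct1[OF a] assms(5) this]
  show "\<exists>g. (\<forall>n. delta0_fun X Y r (g n)) \<and> (\<forall>x\<in>topspace X. limitin Y (\<lambda>n. g n x) (f x) sequentially)"
    by blast
qed

end
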